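(* Let $H \in \mathcal{M}_n(\mathbb{R})$ be a (real) positive semidefinite matrix whose least eigenvalue is simple. Then $H$ has exactly $k$ distinct eigenvalues, where $2 \le k \le n$, if and only if there are $k$ distinct real numbers $\mu_1, \ldots, \mu_k$ such that (i) $H - \mu_i I$ is a singular matrix for every $1 \le i \le k-1$; and (ii) $\prod_{i=1}^{k-1}(H - \mu_i I) = \frac{\prod_{i=1}^{k-1}(\mu_k - \mu_i)}{\|\alpha\|^2}\,\alpha\alpha^T$ and $H\alpha = \mu_k\alpha$ for some $\alpha \in \mathbb{R}^n\setminus\{\mathbf{0}\}$. Moreover, in this case $\mu_1, \ldots, \mu_k$ are exactly the $k$ distinct eigenvalues of $H$.
   Context: $I$ is the identity matrix and $\|\alpha\|^2 = \alpha^T\alpha$ is the squared Euclidean norm. A simple eigenvalue is one of algebraic multiplicity $1$. *)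

theory Defs
  imports "Jordan_Normal_Form.Jordan_Normal_Form"
begin

definition psd_mat :: "nat \<Rightarrow> real mat \<Rightarrow> bool" where
  "psd_mat n H \<longleftrightarrow> H \<in> carrier_mat n n \<and> H\<^sup>T = H \<and>
     (\<forall>x \<in> carrier_vec n. 0 \<le> x \<bullet> (H *\<^sub>v x))"

definition least_eigenvalue_simple :: "real mat \<Rightarrow> bool" where
  "least_eigenvalue_simple H \<longleftrightarrow>
     (\<exists>l. eigenvalue H l \<and> (\<forall>m. eigenvalue H m \<longrightarrow> l \<le> m) \<and>
          Polynomial.order l (char_poly H) = 1)"

fun mat_prod_upto :: "nat \<Rightarrow> (nat \<Rightarrow> real mat) \<Rightarrow> nat \<Rightarrow> real mat" where
  "mat_prod_upto n f 0 = 1\<^sub>m n"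
| "mat_prod_upto n f (Suc m) = mat_prod_upto n f m * f (Suc m)"

definition outer_self :: "real vec \<Rightarrow> real mat" where
  "outer_self a = mat (dim_vec a) (dim_vec a) (\<lambda>(i, j). a $ i * a $ j)"

end

theory Submission
  imports Defs Jordan_Normal_Form.Jordan_Normal_Form_Uniqueness Jordan_Normal_Form.Jordan_Normal_Form_Existence
begin


lemma mat_prod_upto_carrier:
  assumes "\<And>i. f i \<in> carrier_mat n n"
  shows "mat_prod_upto n f m \<in> carrier_mat n n"
  by (induct m) (use assms in auto)

lemma smult_one_mult_vec:
  assumes v: "(v::real vec) \<in> carrier_vec n"
  shows "(c \<cdot>\<^sub>m 1\<^sub>m n) *\<^sub>v v = c \<cdot>\<^sub>v v"
proof -
  show ?thesis
  proof (intro eq_vecI)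
    fix i assume i: "i < dim_vec (c \<cdot>\<^sub>v v)"
    have "(\<Sum>ia=0..<n. c * (if ia = i then 1 else 0) * v $ ia) = (\<Sum>ia=0..<n. if ia = i then c * v $ i else 0)"
      by (rule sum.cong) auto
    then show "((c \<cdot>\<^sub>m 1\<^sub>m n) *\<^sub>v v) $ i = (c \<cdot>\<^sub>v v) $ i"
      using v i by (auto simp: scalar_prod_def)
  qed (use v in auto)
qed

lemma shift_mult_vec:
  assumes H: "(H::real mat) \<in> carrier_mat n n" and v: "v \<in> carrier_vec n"
  shows "(H - c \<cdot>\<^sub>m 1\<^sub>m n) *\<^sub>v v = H *\<^sub>v v - c \<cdot>\<^sub>v v"
  using H v by (simp add: minus_mult_distrib_mat_vec[of _ n n] smult_one_mult_vec)

lemma mat_prod_upto_eigen: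
  assumes H: "H \<in> carrier_mat n n" and v: "v \<in> carrier_vec n"
    and ev: "H *\<^sub>v v = x \<cdot>\<^sub>v v"
  shows "mat_prod_upto n (\<lambda>i. H - \<mu> i \<cdot>\<^sub>m 1\<^sub>m n) m *\<^sub>v v = (\<Prod>i=1..m. x - \<mu> i) \<cdot>\<^sub>v v"
proof (induct m)
  case 0
  then show ?case using v by simp
next
  case (Suc m)
  have C: "mat_prod_upto n (\<lambda>i. H - \<mu> i \<cdot>\<^sub>m 1\<^sub>m n) m \<in> carrier_mat n n"
    by (rule mat_prod_upto_carrier) (use H in auto)
  have "(H - \<mu> (Suc m) \<cdot>\<^sub>m 1\<^sub>m n) *\<^sub>v v = (x - \<mu> (Suc m)) \<cdot>\<^sub>v v"
    using H v ev by (intro eq_vecI) (auto simp: shift_mult_vec algebra_simps)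
  moreover have "mat_prod_upto n (\<lambda>i. H - \<mu> i \<cdot>\<^sub>m 1\<^sub>m n) (Suc m) *\<^sub>v v =
     mat_prod_upto n (\<lambda>i. H - \<mu> i \<cdot>\<^sub>m 1\<^sub>m n) m *\<^sub>v ((H - \<mu> (Suc m) \<cdot>\<^sub>m 1\<^sub>m n) *\<^sub>v v)"
    by (simp, rule assoc_mult_mat_vec[OF C _ v]) (use H in auto)
  ultimately show ?case using Suc C H v
    by (simp add: prod.nat_ivl_Suc' mult.commute mult_mat_vec[OF C] smult_smult_assoc)
qed

lemma outer_self_mult:
  assumes "\<alpha> \<in> carrier_vec n" "v \<in> carrier_vec n"
  shows "outer_self \<alpha> *\<^sub>v v = (\<alpha> \<bullet> v) \<cdot>\<^sub>v \<alpha>"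
  using assms unfolding outer_self_def
  by (intro eq_vecI) (auto simp: scalar_prod_def sum_distrib_left sum_distrib_right mult_ac)

lemma smult_mat_mult_vec:
  assumes "(A::real mat) \<in> carrier_mat n n" "v \<in> carrier_vec n"
  shows "(a \<cdot>\<^sub>m A) *\<^sub>v v = a \<cdot>\<^sub>v (A *\<^sub>v v)"
  using assms by (intro eq_vecI) (auto simp: scalar_prod_def sum_distrib_left mult_ac)

lemma vec_nonzero_idx:
  assumes "w \<in> carrier_vec n" "w \<noteq> 0\<^sub>v n"
  obtains i where "i < n" "w $ i \<noteq> 0"
  using assms by (metis carrier_vecD eq_vecI index_zero_vec(1) index_zero_vec(2))

lemma smult_vec_cancel:
  assumes "(w::real vec) \<in> carrier_vec n" "w \<noteq> 0\<^sub>v n" "a \<cdot>\<^sub>v w = b \<cdot>\<^sub>v w"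
  shows "a = b"
proof -
  obtain i where i: "i < n" "w $ i \<noteq> 0" using vec_nonzero_idx assms by blast
  from arg_cong[OF assms(3), of "\<lambda>x. x $ i"] have "a * w $ i = b * w $ i"
    using i assms(1) by auto
  then show ?thesis using i by auto
qed

lemma eigenvector_imp_not_invertible:
  assumes H: "(H::real mat) \<in> carrier_mat n n" and v: "v \<in> carrier_vec n" "v \<noteq> 0\<^sub>v n"
    and ev: "H *\<^sub>v v = x \<cdot>\<^sub>v v"
  shows "\<not> invertible_mat (H - x \<cdot>\<^sub>m 1\<^sub>m n)"
proof
  let ?A = "H - x \<cdot>\<^sub>m 1\<^sub>m n"
  assume "invertible_mat ?A"
  then obtain B where B: "B * ?A = 1\<^sub>m (dim_row B)" "?A * B = 1\<^sub>m (dim_row ?A)"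
    unfolding invertible_mat_def inverts_mat_def by auto
  have A: "?A \<in> carrier_mat n n" using H by auto
  have Bc: "B \<in> carrier_mat n n"
  proof -
    have "dim_col (B * ?A) = dim_col (1\<^sub>m (dim_row B))" using B(1) by simp
    then have r: "dim_row B = n" using A by simp
    have "dim_col (?A * B) = dim_col (1\<^sub>m (dim_row ?A))" using B(2) by simp
    then have "dim_col B = n" using A by simp
    with r show ?thesis by auto
  qed
  have Av: "?A *\<^sub>v v = 0\<^sub>v n" using H v ev by (simp add: shift_mult_vec)
  have "v = (B * ?A) *\<^sub>v v" using B(1) Bc v by simp
  also have "\<dots> = B *\<^sub>v (?A *\<^sub>v v)" using Bc A v by simp
  also have "\<dots> = 0\<^sub>v n" using Av Bc by (intro eq_vecI) (auto simp: scalar_prod_def)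
  finally show False using v by simp
qed

lemma not_invertible_imp_eigenvalue:
  assumes H: "(H::real mat) \<in> carrier_mat n n"
    and ni: "\<not> invertible_mat (H - x \<cdot>\<^sub>m 1\<^sub>m n)"
  shows "eigenvalue H x"
proof -
  let ?A = "H - x \<cdot>\<^sub>m 1\<^sub>m n"
  have A: "?A \<in> carrier_mat n n" using H by auto
  have "det ?A = 0"
  proof (rule ccontr)
    assume "det ?A \<noteq> 0"
    from det_non_zero_imp_unit[OF A this, of "()"]
    obtain B where "B \<in> carrier_mat n n" "B * ?A = 1\<^sub>m n" "?A * B = 1\<^sub>m n"
      unfolding Units_def ring_mat_def by auto
    then have "invertible_mat ?A" using A
      unfolding invertible_mat_def inverts_mat_def square_mat.simps by auto
    with ni show False by simp
  qed
  then obtain v where v: "v \<in> carrier_vec n" "v \<noteq> 0\<^sub>v n" "?A *\<^sub>v v = 0\<^sub>v n"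
    using det_0_iff_vec_prod_zero_field[OF A] by auto
  have "H *\<^sub>v v = x \<cdot>\<^sub>v v"
  proof -
    have "H *\<^sub>v v - x \<cdot>\<^sub>v v = 0\<^sub>v n" using v H by (simp add: shift_mult_vec)
    show ?thesis
    proof (rule eq_vecI)
      fix i assume "i < dim_vec (x \<cdot>\<^sub>v v)"
      then have i: "i < n" using v by simp
      have "(H *\<^sub>v v - x \<cdot>\<^sub>v v) $ i = 0\<^sub>v n $ i" using \<open>H *\<^sub>v v - x \<cdot>\<^sub>v v = 0\<^sub>v n\<close> by simp
      then show "(H *\<^sub>v v) $ i = (x \<cdot>\<^sub>v v) $ i" using i v H by simp
    qed (use H v in simp)
  qed
  then show ?thesis using v H unfolding eigenvalue_def eigenvector_def by auto
qed

lemma converse_part: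
  fixes \<mu> :: "nat \<Rightarrow> real"
  assumes H: "H \<in> carrier_mat n n"
   and sing: "\<forall>i\<in>{1..k-1}. \<not> invertible_mat (H - \<mu> i \<cdot>\<^sub>m 1\<^sub>m n)"
   and a: "\<alpha> \<in> carrier_vec n" "\<alpha> \<noteq> 0\<^sub>v n"
   and prod: "mat_prod_upto n (\<lambda>i. H - \<mu> i \<cdot>\<^sub>m 1\<^sub>m n) (k-1) = c \<cdot>\<^sub>m outer_self \<alpha>"
   and eig: "H *\<^sub>v \<alpha> = \<mu> k \<cdot>\<^sub>v \<alpha>"
   and k: "1 \<le> k"
  shows "\<mu> ` {1..k} = {x. eigenvalue H x}"
proof
  show "\<mu> ` {1..k} \<subseteq> {x. eigenvalue H x}"
  proof
    fix y assume "y \<in> \<mu> ` {1..k}"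
    then obtain i where i: "i \<in> {1..k}" "y = \<mu> i" by auto
    show "y \<in> {x. eigenvalue H x}"
    proof (cases "i = k")
      case True
      then show ?thesis using i a eig H unfolding eigenvalue_def eigenvector_def by auto
    next
      case False
      then have "i \<in> {1..k-1}" using i by auto
      then show ?thesis using sing not_invertible_imp_eigenvalue[OF H] i by auto
    qed
  qed
  show "{x. eigenvalue H x} \<subseteq> \<mu> ` {1..k}"
  proof
    fix x assume "x \<in> {x. eigenvalue H x}"
    then obtain v where v: "v \<in> carrier_vec n" "v \<noteq> 0\<^sub>v n" "H *\<^sub>v v = x \<cdot>\<^sub>v v"
      using H unfolding eigenvalue_def eigenvector_def by auto
    show "x \<in> \<mu> ` {1..k}"
    proof (rule ccontr)
      assume nx: "x \<notin> \<mu> ` {1..k}"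
      let ?p = "\<Prod>i=1..k-1. x - \<mu> i"
      have p: "?p \<noteq> 0" using nx by (auto simp: prod_zero_iff)
      let ?w = "?p \<cdot>\<^sub>v v"
      have wc: "?w \<in> carrier_vec n" using v by simp
      have w0: "?w \<noteq> 0\<^sub>v n"
      proof
        assume "?w = 0\<^sub>v n"
        obtain i where i: "i < n" "v $ i \<noteq> 0" using vec_nonzero_idx v by blast
        from arg_cong[OF \<open>?w = 0\<^sub>v n\<close>, of "\<lambda>u. u $ i"] i v p show False by simp
      qed
      have oc: "outer_self \<alpha> \<in> carrier_mat n n" using a unfolding outer_self_def by auto
      have "?w = mat_prod_upto n (\<lambda>i. H - \<mu> i \<cdot>\<^sub>m 1\<^sub>m n) (k-1) *\<^sub>v v"
        using mat_prod_upto_eigen[OF H v(1) v(3)] by simp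
      also have "\<dots> = (c * (\<alpha> \<bullet> v)) \<cdot>\<^sub>v \<alpha>"
        unfolding prod using oc v a by (simp add: smult_mat_mult_vec outer_self_mult smult_smult_assoc)
      finally have w: "?w = (c * (\<alpha> \<bullet> v)) \<cdot>\<^sub>v \<alpha>" .
      have "H *\<^sub>v ?w = x \<cdot>\<^sub>v ?w"
        using H v by (simp add: mult_mat_vec smult_smult_assoc mult.commute)
      moreover have "H *\<^sub>v ?w = \<mu> k \<cdot>\<^sub>v ?w"
        unfolding w using H a eig by (simp add: mult_mat_vec smult_smult_assoc mult.commute)
      ultimately have "x \<cdot>\<^sub>v ?w = \<mu> k \<cdot>\<^sub>v ?w" by simp
      then have "x = \<mu> k" using smult_vec_cancel[OF wc w0] by blast
      then show False using nx k by auto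
    qed
  qed
qed


interpretation RC: map_poly_inj_comm_ring_hom "of_real :: real \<Rightarrow> complex" ..
lemma ofr_prod: "map_poly (of_real :: real \<Rightarrow> complex) (\<Prod>e\<leftarrow>es. [:-e,1:]) = (\<Prod>e\<leftarrow>es. [:- of_real e,1:])"
proof (induct es)
  case (Cons a es)
  have l: "map_poly (of_real :: real \<Rightarrow> complex) [:-a,1:] = [:- of_real a,1:]" by simp
  show ?case by (simp only: list.map prod_list.Cons RC.hom_mult Cons l)
qed simp
lemma "map_poly (of_real :: real \<Rightarrow> complex) p = map_poly of_real q \<Longrightarrow> p = q"
  by (rule RC.injectivity)
lemma sym_real_ev:
  assumes H: "(H::real mat) \<in> carrier_mat n n" and sym: "transpose_mat H = H"
    and ev: "eigenvalue (map_mat complex_of_real H) a"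
  shows "cnj a = a"
proof -
  let ?Hc = "map_mat complex_of_real H"
  have Hs: "\<And>i j. i < n \<Longrightarrow> j < n \<Longrightarrow> H $$ (i,j) = H $$ (j,i)"
    using sym H by (metis carrier_matD index_transpose_mat(1))
  obtain v where v: "v \<in> carrier_vec n" "v \<noteq> 0\<^sub>v n" "?Hc *\<^sub>v v = a \<cdot>\<^sub>v v"
    using ev H unfolding eigenvalue_def eigenvector_def by auto
  have comp: "(\<Sum>j=0..<n. of_real (H $$ (i,j)) * v $ j) = a * v $ i" if i: "i < n" for i
  proof -
    have e1: "(?Hc *\<^sub>v v) $ i = a * v $ i" using v i by simp
    have e2: "(?Hc *\<^sub>v v) $ i = (\<Sum>j=0..<n. of_real (H $$ (i,j)) * v $ j)"
      using i v(1) H by (simp add: scalar_prod_def)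
    show ?thesis using e1 e2 by metis
  qed
  define N where "N = (\<Sum>i=0..<n. cnj (v $ i) * v $ i)"
  define x where "x = (\<Sum>i=0..<n. \<Sum>j=0..<n. cnj (v $ i) * (of_real (H $$ (i,j)) * v $ j))"
  have "x = (\<Sum>i=0..<n. cnj (v $ i) * (\<Sum>j=0..<n. of_real (H $$ (i,j)) * v $ j))"
    unfolding x_def by (simp add: sum_distrib_left)
  also have "\<dots> = (\<Sum>i=0..<n. a * (cnj (v $ i) * v $ i))"
  proof (rule sum.cong[OF refl])
    fix i assume "i \<in> {0..<n}"
    then have "(\<Sum>j=0..<n. of_real (H $$ (i,j)) * v $ j) = a * v $ i" by (intro comp) auto
    then show "cnj (v $ i) * (\<Sum>j=0..<n. of_real (H $$ (i,j)) * v $ j) = a * (cnj (v $ i) * v $ i)"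
      by (simp add: mult_ac)
  qed
  finally have x1: "x = a * N" unfolding N_def by (simp add: sum_distrib_left)
  have "cnj x = (\<Sum>i=0..<n. \<Sum>j=0..<n. v $ i * (of_real (H $$ (i,j)) * cnj (v $ j)))"
    unfolding x_def by (simp add: cnj_sum)
  also have "\<dots> = (\<Sum>j=0..<n. \<Sum>i=0..<n. v $ i * (of_real (H $$ (i,j)) * cnj (v $ j)))"
    by (rule sum.swap)
  also have "\<dots> = x" unfolding x_def
    by (intro sum.cong refl) (auto simp: Hs mult_ac)
  finally have x2: "cnj x = x" .
  have N1: "N = of_real (\<Sum>i=0..<n. (cmod (v $ i))\<^sup>2)"
    unfolding N_def of_real_sum by (intro sum.cong refl) (metis complex_norm_square mult.commute of_real_power)
  have "(\<Sum>i=0..<n. (cmod (v $ i))\<^sup>2) \<noteq> 0"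
  proof
    assume "(\<Sum>i=0..<n. (cmod (v $ i))\<^sup>2) = 0"
    then have "\<forall>i\<in>{0..<n}. (cmod (v $ i))\<^sup>2 = 0" by (subst (asm) sum_nonneg_eq_0_iff) auto
    then have "v = 0\<^sub>v n" using v(1) by (intro eq_vecI) auto
    with v(2) show False ..
  qed
  then have N0: "N \<noteq> 0" unfolding N1 by (simp only: of_real_eq_0_iff) simp
  have Nr: "cnj N = N" unfolding N1 by (simp only: complex_cnj_complex_of_real)
  from x2 x1 have "cnj a * N = a * N" using Nr by simp
  with N0 show ?thesis by simp
qed

lemma real_split:
  assumes H: "(H::real mat) \<in> carrier_mat n n" and sym: "transpose_mat H = H"
  shows "\<exists>es. char_poly H = (\<Prod>e\<leftarrow>es. [:-e,1:])"
proof -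
  let ?Hc = "map_mat complex_of_real H"
  have Hc: "?Hc \<in> carrier_mat n n" using H by simp
  obtain as where as: "char_poly ?Hc = (\<Prod>a\<leftarrow>as. [:-a,1:])"
    using char_poly_factorized[OF Hc] by auto
  have real: "a = of_real (Re a)" if a: "a \<in> set as" for a
  proof -
    have "poly (char_poly ?Hc) a = 0" unfolding as using a
      by (simp add: poly_prod_list prod_list_zero_iff)
    then have "eigenvalue ?Hc a" using eigenvalue_root_char_poly[OF Hc] by simp
    then have "cnj a = a" using sym_real_ev[OF H sym] by simp
    then show ?thesis by (metis Reals_cnj_iff Re_complex_of_real Reals_cases)
  qed
  have "map (\<lambda>e. complex_of_real e) (map Re as) = as"
    using real by (induct as) auto
  then have "map_poly complex_of_real (\<Prod>e\<leftarrow>map Re as. [:-e,1:]) = (\<Prod>a\<leftarrow>as. [:-a,1:])"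
  proof -
    have "(\<Prod>e\<leftarrow>map Re as. [:- complex_of_real e, 1:]) = (\<Prod>a\<leftarrow>map complex_of_real (map Re as). [:- a, 1:])"
      by (simp only: map_map o_def)
    then show ?thesis unfolding ofr_prod \<open>map (\<lambda>e. complex_of_real e) (map Re as) = as\<close> .
  qed
  also have "\<dots> = map_poly complex_of_real (char_poly H)"
    unfolding as[symmetric] by (rule of_real_hom.char_poly_hom[OF H])
  finally show ?thesis using RC.injectivity by metis
qed



definition dmat :: "nat \<Rightarrow> (nat \<Rightarrow> real) \<Rightarrow> real mat" where
  "dmat n x = mat n n (\<lambda>(i,j). if i = j then x i else 0)"

lemma jordan_matrix_ones:
  "jordan_matrix (map (\<lambda>e. (1,e)) ds) = dmat (length ds) (\<lambda>i. ds ! i)"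
proof (induct ds)
  case Nil
  then show ?case unfolding jordan_matrix_def dmat_def by (intro eq_matI) auto
next
  case (Cons a ds)
  have sl: "sum_list (map fst (map (\<lambda>e. (1::nat, e)) ds)) = length ds"
    by (induct ds) auto
  show ?case unfolding list.map jordan_matrix_Cons sl Cons unfolding dmat_def
    by (intro eq_matI) (auto simp: nth_Cons')
qed

lemma min_sum_eq:
  fixes xs :: "nat list"
  assumes "sum_list (map (min 2) xs) = sum_list (map (min 1) xs)" "x \<in> set xs"
  shows "x \<le> 1"
  using assms
proof (induct xs)
  case (Cons a xs)
  have le: "sum_list (map (min 1) xs) \<le> sum_list (map (min 2) xs)"
    by (induct xs) auto
  have "min 1 a \<le> min 2 a" by auto
  with Cons.prems(1) le have "min 2 a = min 1 a" "sum_list (map (min 2) xs) = sum_list (map (min 1) xs)"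
    by auto
  then show ?case using Cons by (cases "x = a") auto
qed simp

lemma real_self_sprod_0:
  assumes "(w::real vec) \<in> carrier_vec n" "w \<bullet> w = 0"
  shows "w = 0\<^sub>v n"
  using conjugate_square_eq_0_vec[OF assms(1)] assms(2) by simp

lemma sym_kernel:
  assumes H: "(H::real mat) \<in> carrier_mat n n" and sym: "transpose_mat H = H"
  shows "dim_gen_eigenspace H e 2 = dim_gen_eigenspace H e 1"
proof -
  let ?C = "char_matrix H e"
  have C: "?C \<in> carrier_mat n n" using H by simp
  have Cs: "transpose_mat ?C = ?C"
  proof (rule eq_matI)
    fix i j assume "i < dim_row ?C" "j < dim_col ?C"
    then have ij: "i < n" "j < n" using C by auto
    have "H $$ (j,i) = H $$ (i,j)" using sym ij H by (metis carrier_matD index_transpose_mat(1))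
    then show "transpose_mat ?C $$ (i,j) = ?C $$ (i,j)"
      using ij H unfolding char_matrix_def by auto
  qed (use C in auto)
  have p2: "?C ^\<^sub>m 2 = ?C * ?C" using C by (simp add: numeral_2_eq_2)
  have p1: "?C ^\<^sub>m 1 = ?C" using C by simp
  have "mat_kernel (?C ^\<^sub>m 2) = mat_kernel (?C ^\<^sub>m 1)"
  proof
    show "mat_kernel (?C ^\<^sub>m 1) \<subseteq> mat_kernel (?C ^\<^sub>m 2)"
    proof
      fix v assume "v \<in> mat_kernel (?C ^\<^sub>m 1)"
      then have v: "v \<in> carrier_vec n" "?C *\<^sub>v v = 0\<^sub>v n" unfolding p1 mat_kernel_def using C by auto
      have "(?C * ?C) *\<^sub>v v = ?C *\<^sub>v (?C *\<^sub>v v)" using C v by simp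
      also have "\<dots> = 0\<^sub>v n" using v C by (intro eq_vecI) (auto simp: scalar_prod_def)
      finally show "v \<in> mat_kernel (?C ^\<^sub>m 2)" unfolding p2 mat_kernel_def using C v by auto
    qed
    show "mat_kernel (?C ^\<^sub>m 2) \<subseteq> mat_kernel (?C ^\<^sub>m 1)"
    proof
      fix v assume "v \<in> mat_kernel (?C ^\<^sub>m 2)"
      then have v: "v \<in> carrier_vec n" "(?C * ?C) *\<^sub>v v = 0\<^sub>v n" unfolding p2 mat_kernel_def using C by auto
      let ?w = "?C *\<^sub>v v"
      have w: "?w \<in> carrier_vec n" using C v by simp
      have Cw: "?C *\<^sub>v ?w = 0\<^sub>v n" using v C by simp
      have "?w \<bullet> ?w = (transpose_mat ?C *\<^sub>v v) \<bullet> ?w" using Cs by simp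
      also have "\<dots> = v \<bullet> (?C *\<^sub>v ?w)" by (rule transpose_vec_mult_scalar[OF C w v(1)])
      also have "\<dots> = 0" unfolding Cw using v by simp
      finally have "?w = 0\<^sub>v n" using real_self_sprod_0[OF w] by simp
      then show "v \<in> mat_kernel (?C ^\<^sub>m 1)" unfolding p1 mat_kernel_def using C v by auto
    qed
  qed
  moreover have "dim_col (?C ^\<^sub>m 2) = dim_col (?C ^\<^sub>m 1)" using C by simp
  ultimately show ?thesis unfolding dim_gen_eigenspace_def kernel_dim_def by simp
qed

lemma sum_fst_filter_ones:
  "sum_list (map fst (filter (\<lambda>na. snd na = l) (map (\<lambda>e. (1::nat, e)) ds))) = length (filter (\<lambda>e. e = l) ds)"
  by (induct ds) auto

lemma sym_diagonalize:
  assumes H: "(H::real mat) \<in> carrier_mat n n" and sym: "transpose_mat H = H"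
    and split: "char_poly H = (\<Prod>e\<leftarrow>es. [:-e,1:])"
  shows "\<exists>P R ds. P \<in> carrier_mat n n \<and> R \<in> carrier_mat n n \<and> P * R = 1\<^sub>m n \<and> R * P = 1\<^sub>m n
     \<and> H = P * dmat n (\<lambda>i. ds ! i) * R \<and> length ds = n
     \<and> (\<forall>l. Polynomial.order l (char_poly H) = length (filter (\<lambda>e. e = l) ds))"
proof -
  obtain n_as where jnf: "jordan_nf H n_as" using jordan_nf_exists[OF H split] by auto
  have ones: "s = 1" if mem: "(s,e) \<in> set n_as" for s e
  proof -
    have "dim_gen_eigenspace H e 2 = dim_gen_eigenspace H e 1" by (rule sym_kernel[OF H sym])
    then have eq: "sum_list (map (min 2) (map fst (filter (\<lambda>(n, e'). e' = e) n_as)))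
      = sum_list (map (min 1) (map fst (filter (\<lambda>(n, e'). e' = e) n_as)))"
      unfolding dim_gen_eigenspace[OF jnf] .
    have "s \<in> set (map fst (filter (\<lambda>(n, e'). e' = e) n_as))" using mem by force
    from min_sum_eq[OF eq this] have "s \<le> 1" .
    moreover have "s \<noteq> 0" using jnf mem unfolding jordan_nf_def by force
    ultimately show ?thesis by simp
  qed
  define ds where "ds = map snd n_as"
  have "map (\<lambda>x. (1::nat, snd x)) n_as = n_as"
  proof (rule map_idI)
    fix x assume "x \<in> set n_as"
    moreover obtain a b where x: "x = (a,b)" by (cases x)
    ultimately have "a = 1" using ones by blast
    then show "(1, snd x) = x" using x by simp
  qed
  then have nas: "n_as = map (\<lambda>e. (1,e)) ds" unfolding ds_def map_map o_def by simp
  from jnf have "similar_mat H (dmat (length ds) (\<lambda>i. ds ! i))"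
    unfolding jordan_nf_def nas jordan_matrix_ones by simp
  from similar_matD[OF this] obtain m P R where
    cm: "{H, dmat (length ds) (\<lambda>i. ds ! i), P, R} \<subseteq> carrier_mat m m" and
    PR: "P * R = 1\<^sub>m m" "R * P = 1\<^sub>m m" "H = P * dmat (length ds) (\<lambda>i. ds ! i) * R" by blast
  have m: "m = n" using cm H by auto
  have len: "length ds = n" using cm m unfolding dmat_def by auto
  show ?thesis
    apply (rule exI[of _ P], rule exI[of _ R], rule exI[of _ ds])
    using cm PR m len jordan_nf_order[OF jnf] unfolding nas sum_fst_filter_ones by auto
qed

lemma dmat_carrier[simp]: "dmat n x \<in> carrier_mat n n"
  unfolding dmat_def by simp

lemma sum_single':
  fixes a n :: nat
  assumes a: "a < n" and z: "\<And>i. i < n \<Longrightarrow> i \<noteq> a \<Longrightarrow> g i = 0"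
  shows "(\<Sum>i = 0..<n. g i) = (g a :: real)"
proof -
  have "(\<Sum>i = 0..<n. g i) = g a + (\<Sum>i \<in> {0..<n} - {a}. g i)"
    by (rule sum.remove) (use a in auto)
  also have "(\<Sum>i \<in> {0..<n} - {a}. g i) = 0" using z by (intro sum.neutral) auto
  finally show ?thesis by simp
qed

lemma sum_single:
  fixes a n :: nat
  assumes "a < n"
  shows "(\<Sum>t = 0..<n. (if t = a then f t else 0)) = (f a :: real)"
  by (rule trans[OF sum_single'[OF assms]]) auto

lemma dmat_mult_left:
  assumes M: "M \<in> carrier_mat n nc"
  shows "dmat n x * M = mat n nc (\<lambda>(a,b). x a * M $$ (a,b))"
proof (rule eq_matI)
  fix a b assume ab: "a < dim_row (mat n nc (\<lambda>(a,b). x a * M $$ (a,b)))" "b < dim_col (mat n nc (\<lambda>(a,b). x a * M $$ (a,b)))"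
  then have ab: "a < n" "b < nc" by auto
  have "(dmat n x * M) $$ (a,b) = (\<Sum>i = 0..<n. (if a = i then x a else 0) * M $$ (i, b))"
    using ab M unfolding dmat_def by (auto simp: scalar_prod_def)
  also have "\<dots> = x a * M $$ (a,b)" using ab by (subst sum_single'[of a]) auto
  finally show "(dmat n x * M) $$ (a,b) = mat n nc (\<lambda>(a,b). x a * M $$ (a,b)) $$ (a,b)" using ab by simp
qed (use M in \<open>auto simp: dmat_def\<close>)

lemma mult_dmat_right:
  assumes M: "M \<in> carrier_mat nr n"
  shows "M * dmat n x = mat nr n (\<lambda>(a,b). M $$ (a,b) * x b)"
proof (rule eq_matI)
  fix a b assume ab: "a < dim_row (mat nr n (\<lambda>(a,b). M $$ (a,b) * x b))" "b < dim_col (mat nr n (\<lambda>(a,b). M $$ (a,b) * x b))"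
  then have ab: "a < nr" "b < n" by auto
  have "(M * dmat n x) $$ (a,b) = (\<Sum>i = 0..<n. M $$ (a, i) * (if i = b then x i else 0))"
    using ab M unfolding dmat_def by (auto simp: scalar_prod_def)
  also have "\<dots> = M $$ (a,b) * x b" using ab by (subst sum_single'[of b]) auto
  finally show "(M * dmat n x) $$ (a,b) = mat nr n (\<lambda>(a,b). M $$ (a,b) * x b) $$ (a,b)" using ab by simp
qed (use M in \<open>auto simp: dmat_def\<close>)

lemma dmat_mult_vec:
  assumes v: "v \<in> carrier_vec n"
  shows "dmat n x *\<^sub>v v = vec n (\<lambda>a. x a * v $ a)"
proof (rule eq_vecI)
  fix a assume "a < dim_vec (vec n (\<lambda>a. x a * v $ a))"
  then have a: "a < n" by simp
  have "(dmat n x *\<^sub>v v) $ a = (\<Sum>i = 0..<n. (if a = i then x a else 0) * v $ i)"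
    using a v unfolding dmat_def by (auto simp: scalar_prod_def)
  also have "\<dots> = x a * v $ a" using a by (subst sum_single'[of a]) auto
  finally show "(dmat n x *\<^sub>v v) $ a = vec n (\<lambda>a. x a * v $ a) $ a" using a by simp
qed (use v in \<open>auto simp: dmat_def\<close>)

lemma dmat_mult: "dmat n x * dmat n y = dmat n (\<lambda>i. x i * y i)"
  unfolding dmat_mult_left[OF dmat_carrier] unfolding dmat_def by (intro eq_matI) auto

lemma dmat_shift: "dmat n x - c \<cdot>\<^sub>m 1\<^sub>m n = dmat n (\<lambda>i. x i - c)"
  unfolding dmat_def by (intro eq_matI) auto

lemma dmat_prod: "mat_prod_upto n (\<lambda>i. dmat n x - \<mu> i \<cdot>\<^sub>m 1\<^sub>m n) m = dmat n (\<lambda>j. \<Prod>i=1..m. x j - \<mu> i)"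
proof (induct m)
  case 0
  then show ?case unfolding dmat_def by (intro eq_matI) auto
next
  case (Suc m)
  show ?case unfolding mat_prod_upto.simps Suc by (simp add: dmat_shift dmat_mult prod.nat_ivl_Suc' mult.commute)
qed



lemma conj_shift:
  assumes P: "P \<in> carrier_mat n n" and R: "R \<in> carrier_mat n n" and D: "D \<in> carrier_mat n n"
    and PR: "P * R = 1\<^sub>m n"
  shows "P * D * R - c \<cdot>\<^sub>m 1\<^sub>m n = P * (D - c \<cdot>\<^sub>m 1\<^sub>m n) * (R :: real mat)"
proof -
  have "P * (D - c \<cdot>\<^sub>m 1\<^sub>m n) = P * D - c \<cdot>\<^sub>m P"
    using P D mult_smult_distrib[OF P one_carrier_mat, of c] by (simp add: mult_minus_distrib_mat[of _ n n])
  then have "P * (D - c \<cdot>\<^sub>m 1\<^sub>m n) * R = (P * D) * R - (c \<cdot>\<^sub>m P) * R"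
    using P D R by (simp add: minus_mult_distrib_mat[of _ n n])
  also have "(c \<cdot>\<^sub>m P) * R = c \<cdot>\<^sub>m 1\<^sub>m n"
    using P R PR by (simp add: mult_smult_assoc_mat[of _ n n])
  finally show ?thesis by simp
qed

lemma conj_mult:
  assumes P: "P \<in> carrier_mat n n" and R: "R \<in> carrier_mat n n"
    and M: "M \<in> carrier_mat n n" and N: "N \<in> carrier_mat n n"
    and RP: "R * P = 1\<^sub>m n"
  shows "(P * M * R) * (P * N * R) = P * (M * N) * (R :: real mat)"
proof -
  have "(P * M * R) * (P * N * R) = P * M * (R * P) * N * R"
    using P M R N by (simp add: assoc_mult_mat[of _ n n _ n _ n])
  also have "\<dots> = P * (M * N) * R" using RP P M N R by (simp add: assoc_mult_mat[of _ n n _ n _ n])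
  finally show ?thesis .
qed

lemma prod_conj:
  assumes P: "P \<in> carrier_mat n n" and R: "R \<in> carrier_mat n n" and D: "D \<in> carrier_mat n n"
    and PR: "P * R = 1\<^sub>m n" and RP: "R * P = 1\<^sub>m n"
  shows "mat_prod_upto n (\<lambda>i. P * D * R - \<mu> i \<cdot>\<^sub>m 1\<^sub>m n) m
     = P * mat_prod_upto n (\<lambda>i. D - \<mu> i \<cdot>\<^sub>m 1\<^sub>m n) m * (R :: real mat)"
proof (induct m)
  case 0
  then show ?case using P R PR by simp
next
  case (Suc m)
  have M: "mat_prod_upto n (\<lambda>i. D - \<mu> i \<cdot>\<^sub>m 1\<^sub>m n) m \<in> carrier_mat n n"
    by (rule mat_prod_upto_carrier) (use D in auto)
  show ?case unfolding mat_prod_upto.simps Suc unfolding conj_shift[OF P R D PR]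
    by (rule conj_mult[OF P R M _ RP]) (use D in auto)
qed

lemma forward_core:
  fixes H P R :: "real mat" and ds :: "real list" and \<mu> :: "nat \<Rightarrow> real"
  assumes H: "H \<in> carrier_mat n n" and sym: "transpose_mat H = H"
    and P: "P \<in> carrier_mat n n" and R: "R \<in> carrier_mat n n"
    and PR: "P * R = 1\<^sub>m n" and RP: "R * P = 1\<^sub>m n"
    and HD: "H = P * D * R" and Ddef: "D = dmat n (\<lambda>i. ds ! i)"
    and j0: "j0 < n" "ds ! j0 = l" and uniq: "\<forall>j<n. j \<noteq> j0 \<longrightarrow> ds ! j \<noteq> l"
    and van: "\<forall>j<n. j \<noteq> j0 \<longrightarrow> (\<Prod>i=1..m. ds ! j - \<mu> i) = 0"
  shows "\<exists>\<alpha>\<in>carrier_vec n. \<alpha> \<noteq> 0\<^sub>v n \<and>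
     mat_prod_upto n (\<lambda>i. H - \<mu> i \<cdot>\<^sub>m 1\<^sub>m n) m = ((\<Prod>i=1..m. l - \<mu> i) / (\<alpha> \<bullet> \<alpha>)) \<cdot>\<^sub>m outer_self \<alpha>
     \<and> H *\<^sub>v \<alpha> = l \<cdot>\<^sub>v \<alpha>"
proof -
  define c0 where "c0 = (\<Prod>i=1..m. l - \<mu> i)"
  have D: "D \<in> carrier_mat n n" unfolding Ddef by simp
  define e where "e = (\<lambda>j. if j = j0 then c0 else 0)"
  have E: "mat_prod_upto n (\<lambda>i. D - \<mu> i \<cdot>\<^sub>m 1\<^sub>m n) m = dmat n e"
  proof -
    have "mat_prod_upto n (\<lambda>i. D - \<mu> i \<cdot>\<^sub>m 1\<^sub>m n) m = dmat n (\<lambda>j. \<Prod>i=1..m. ds ! j - \<mu> i)"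
      unfolding Ddef by (rule dmat_prod)
    also have "\<dots> = dmat n e" unfolding dmat_def e_def c0_def using van j0 by (intro eq_matI) auto
    finally show ?thesis .
  qed
  define Q where "Q = mat_prod_upto n (\<lambda>i. H - \<mu> i \<cdot>\<^sub>m 1\<^sub>m n) m"
  have Q: "Q = P * dmat n e * R" unfolding Q_def HD prod_conj[OF P R D PR RP] E ..
  define u where "u = col P j0"
  define r where "r = row R j0"
  have u: "u \<in> carrier_vec n" and r: "r \<in> carrier_vec n" unfolding u_def r_def using P R by auto
  have Qent: "Q $$ (a,b) = c0 * u $ a * r $ b" if ab: "a < n" "b < n" for a b
  proof -
    have PE: "P * dmat n e = mat n n (\<lambda>(a,b). P $$ (a,b) * e b)" by (rule mult_dmat_right[OF P])
    have "Q $$ (a,b) = (\<Sum>i = 0..<n. P $$ (a,i) * e i * R $$ (i,b))"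
      unfolding Q PE using ab P R by (simp add: scalar_prod_def)
    also have "\<dots> = P $$ (a,j0) * e j0 * R $$ (j0,b)"
      using j0 by (subst sum_single'[of j0]) (auto simp: e_def)
    finally show ?thesis unfolding u_def r_def e_def using ab j0 P R by simp
  qed
  have RH: "R * H = D * R"
  proof -
    have "R * H = (R * P) * D * R" unfolding HD using R P D by (simp add: assoc_mult_mat[of _ n n _ n _ n])
    then show ?thesis using RP D R by simp
  qed
  have HP: "H * P = P * D"
  proof -
    have "H * P = P * D * (R * P)" unfolding HD using R P D by (simp add: assoc_mult_mat[of _ n n _ n _ n])
    then show ?thesis using RP D P by simp
  qed
  have DR: "D * R = mat n n (\<lambda>(a,b). ds ! a * R $$ (a,b))" unfolding Ddef by (rule dmat_mult_left[OF R])
  have PD: "P * D = mat n n (\<lambda>(a,b). P $$ (a,b) * ds ! b)" unfolding Ddef by (rule mult_dmat_right[OF P])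
  have Hr: "H *\<^sub>v r = l \<cdot>\<^sub>v r"
  proof (rule eq_vecI)
    fix b assume "b < dim_vec (l \<cdot>\<^sub>v r)"
    then have b: "b < n" using r by simp
    have Hs: "\<And>i j. i < n \<Longrightarrow> j < n \<Longrightarrow> H $$ (i,j) = H $$ (j,i)"
      using sym H by (metis carrier_matD index_transpose_mat(1))
    have "(H *\<^sub>v r) $ b = (\<Sum>i = 0..<n. H $$ (b,i) * R $$ (j0,i))"
      using b H R j0 unfolding r_def by (simp add: scalar_prod_def)
    also have "\<dots> = (\<Sum>i = 0..<n. R $$ (j0,i) * H $$ (i,b))"
      using b by (intro sum.cong refl) (auto simp: Hs mult.commute)
    also have "\<dots> = (R * H) $$ (j0,b)" using b j0 R H by (simp add: scalar_prod_def)
    also have "\<dots> = ds ! j0 * R $$ (j0,b)" unfolding RH DR using b j0 by simp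
    finally show "(H *\<^sub>v r) $ b = (l \<cdot>\<^sub>v r) $ b" using b j0 R unfolding r_def by simp
  qed (use H r in simp)
  define x where "x = R *\<^sub>v r"
  have x: "x \<in> carrier_vec n" unfolding x_def using R r by simp
  have Dx: "D *\<^sub>v x = l \<cdot>\<^sub>v x"
  proof -
    have "D *\<^sub>v x = (D * R) *\<^sub>v r" unfolding x_def using D R r by simp
    also have "\<dots> = R *\<^sub>v (H *\<^sub>v r)" unfolding RH[symmetric] using R H r by simp
    also have "\<dots> = l \<cdot>\<^sub>v x" unfolding Hr x_def using R r by (simp add: mult_mat_vec)
    finally show ?thesis .
  qed
  have x0: "x $ t = 0" if t: "t < n" "t \<noteq> j0" for t
  proof -
    have A: "(D *\<^sub>v x) $ t = ds ! t * x $ t" unfolding Ddef dmat_mult_vec[OF x] using t by simp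
    have B: "(D *\<^sub>v x) $ t = l * x $ t" using Dx t x by simp
    have "ds ! t \<noteq> l" using uniq t by auto
    then show ?thesis using A B by (metis mult_right_cancel)
  qed
  have rx: "r = x $ j0 \<cdot>\<^sub>v u"
  proof -
    have "r = (P * R) *\<^sub>v r" using PR r by simp
    also have "\<dots> = P *\<^sub>v x" unfolding x_def using P R r by simp
    also have "\<dots> = x $ j0 \<cdot>\<^sub>v u"
    proof (rule eq_vecI)
      fix b assume "b < dim_vec (x $ j0 \<cdot>\<^sub>v u)"
      then have b: "b < n" using u by simp
      have "(P *\<^sub>v x) $ b = (\<Sum>i = 0..<n. P $$ (b,i) * x $ i)"
        using b P x by (simp add: scalar_prod_def)
      also have "\<dots> = P $$ (b,j0) * x $ j0" using j0 x0 by (subst sum_single'[of j0]) auto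
      finally show "(P *\<^sub>v x) $ b = (x $ j0 \<cdot>\<^sub>v u) $ b" using b P j0 unfolding u_def by simp
    qed (use P u in simp)
    finally show ?thesis .
  qed
  have ru: "r \<bullet> u = 1"
  proof -
    have "r \<bullet> u = (R * P) $$ (j0,j0)" unfolding r_def u_def using j0 R P by simp
    then show ?thesis using RP j0 by simp
  qed
  then have su: "x $ j0 * (u \<bullet> u) = 1" unfolding rx using u by simp
  then have uu: "u \<bullet> u \<noteq> 0" by auto
  have u0: "u \<noteq> 0\<^sub>v n" using uu u by auto
  have s: "x $ j0 = 1 / (u \<bullet> u)" using su uu by (simp add: field_simps)
  have Hu: "H *\<^sub>v u = l \<cdot>\<^sub>v u"
  proof (rule eq_vecI)
    fix a assume "a < dim_vec (l \<cdot>\<^sub>v u)"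
    then have a: "a < n" using u by simp
    have "(H *\<^sub>v u) $ a = (H * P) $$ (a, j0)" unfolding u_def using a j0 H P by simp
    also have "\<dots> = P $$ (a,j0) * ds ! j0" unfolding HP PD using a j0 by simp
    finally show "(H *\<^sub>v u) $ a = (l \<cdot>\<^sub>v u) $ a" unfolding u_def using a j0 P by simp
  qed (use H u in simp)
  have "Q = (c0 / (u \<bullet> u)) \<cdot>\<^sub>m outer_self u"
  proof (rule eq_matI)
    fix a b assume ab: "a < dim_row ((c0 / (u \<bullet> u)) \<cdot>\<^sub>m outer_self u)" "b < dim_col ((c0 / (u \<bullet> u)) \<cdot>\<^sub>m outer_self u)"
    then have ab: "a < n" "b < n" using u unfolding outer_self_def by auto
    have "r $ b = x $ j0 * u $ b" unfolding rx using ab u by simp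
    then show "Q $$ (a,b) = ((c0 / (u \<bullet> u)) \<cdot>\<^sub>m outer_self u) $$ (a,b)"
      unfolding Qent[OF ab] s using ab u unfolding outer_self_def by simp
  qed (use u P R in \<open>auto simp: Q outer_self_def\<close>)
  then show ?thesis using u u0 Hu unfolding Q_def c0_def by blast
qed


theorem corollary4p3:
  fixes n k :: nat and H :: "real mat"
  assumes psd: "psd_mat n H"
    and simple: "least_eigenvalue_simple H"
    and k: "2 \<le> k" "k \<le> n"
  defines "P \<equiv> (\<lambda>\<mu> :: nat \<Rightarrow> real.
              inj_on \<mu> {1..k} \<and>
              (\<forall>i \<in> {1..k-1}. \<not> invertible_mat (H - \<mu> i \<cdot>\<^sub>m 1\<^sub>m n)) \<and>
              (\<exists>\<alpha> \<in> carrier_vec n. \<alpha> \<noteq> 0\<^sub>v n \<and>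
                 mat_prod_upto n (\<lambda>i. H - \<mu> i \<cdot>\<^sub>m 1\<^sub>m n) (k - 1) =
                   ((\<Prod>i = 1..k-1. \<mu> k - \<mu> i) / (\<alpha> \<bullet> \<alpha>)) \<cdot>\<^sub>m outer_self \<alpha> \<and>
                 H *\<^sub>v \<alpha> = \<mu> k \<cdot>\<^sub>v \<alpha>))"
  shows "(card {x. eigenvalue H x} = k \<longleftrightarrow> (\<exists>\<mu>. P \<mu>)) \<and>
         (\<forall>\<mu>. P \<mu> \<longrightarrow> \<mu> ` {1..k} = {x. eigenvalue H x})"
proof -
  have H: "H \<in> carrier_mat n n" and sym: "transpose_mat H = H"
    using psd unfolding psd_mat_def by auto
  have part2: "\<forall>\<mu>. P \<mu> \<longrightarrow> \<mu> ` {1..k} = {x. eigenvalue H x}"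
  proof (intro allI impI)
    fix \<mu> assume "P \<mu>"
    then obtain \<alpha> where sing: "\<forall>i \<in> {1..k-1}. \<not> invertible_mat (H - \<mu> i \<cdot>\<^sub>m 1\<^sub>m n)"
      and a: "\<alpha> \<in> carrier_vec n" "\<alpha> \<noteq> 0\<^sub>v n"
      and prod: "mat_prod_upto n (\<lambda>i. H - \<mu> i \<cdot>\<^sub>m 1\<^sub>m n) (k - 1) =
                   ((\<Prod>i = 1..k-1. \<mu> k - \<mu> i) / (\<alpha> \<bullet> \<alpha>)) \<cdot>\<^sub>m outer_self \<alpha>"
      and eig: "H *\<^sub>v \<alpha> = \<mu> k \<cdot>\<^sub>v \<alpha>"
      unfolding P_def by blast
    show "\<mu> ` {1..k} = {x. eigenvalue H x}"
      by (rule converse_part[OF H sing a prod eig]) (use k in auto)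
  qed
  have dir1: "\<exists>\<mu>. P \<mu>" if card: "card {x. eigenvalue H x} = k"
  proof -
    let ?S = "{x. eigenvalue H x}"
    obtain l where l: "eigenvalue H l" "\<forall>m. eigenvalue H m \<longrightarrow> l \<le> m"
      and ord: "Polynomial.order l (char_poly H) = 1"
      using simple unfolding least_eigenvalue_simple_def by blast
    have finS: "finite ?S"
    proof -
      have "char_poly H \<noteq> 0" using degree_monic_char_poly[OF H] by auto
      then have "finite {x. poly (char_poly H) x = 0}" by (rule poly_roots_finite)
      then show ?thesis using eigenvalue_root_char_poly[OF H] by simp
    qed
    obtain es where split: "char_poly H = (\<Prod>e\<leftarrow>es. [:-e,1:])" using real_split[OF H sym] by blast
    obtain PP RR ds where PP: "PP \<in> carrier_mat n n" and RR: "RR \<in> carrier_mat n n"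
      and PR: "PP * RR = 1\<^sub>m n" and RP: "RR * PP = 1\<^sub>m n"
      and HD: "H = PP * dmat n (\<lambda>i. ds ! i) * RR" and len: "length ds = n"
      and ordds: "\<forall>l. Polynomial.order l (char_poly H) = length (filter (\<lambda>e. e = l) ds)"
      using sym_diagonalize[OF H sym split] by blast
    have "card {i. i < length ds \<and> ds ! i = l} = 1"
      using ordds ord by (simp add: length_filter_conv_card)
    then obtain j0 where j0set: "{i. i < length ds \<and> ds ! i = l} = {j0}" by (rule card_1_singletonE)
    then have j0: "j0 < n" "ds ! j0 = l" using len by auto
    have uniq: "\<forall>j<n. j \<noteq> j0 \<longrightarrow> ds ! j \<noteq> l" using j0set len by auto
    have sim: "similar_mat H (dmat n (\<lambda>i. ds ! i))"
      by (rule similar_matI[where n=n and P=PP and Q=RR]) (use H PP RR PR RP HD in auto)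
    have dsev: "eigenvalue H (ds ! j)" if j: "j < n" for j
    proof -
      let ?D = "dmat n (\<lambda>i. ds ! i)"
      have "?D *\<^sub>v unit_vec n j = (ds ! j) \<cdot>\<^sub>v unit_vec n j"
        unfolding dmat_mult_vec[OF unit_vec_carrier] by (intro eq_vecI) (auto simp: unit_vec_def)
      moreover have "unit_vec n j \<noteq> 0\<^sub>v n"
      proof
        assume "unit_vec n j = 0\<^sub>v n"
        from arg_cong[OF this, of "\<lambda>v. v $ j"] j show False by simp
      qed
      moreover have "dim_row ?D = n" by (simp add: dmat_def)
      ultimately have "eigenvalue ?D (ds ! j)" unfolding eigenvalue_def eigenvector_def
        by (intro exI[of _ "unit_vec n j"]) auto
      then have "poly (char_poly ?D) (ds ! j) = 0" using eigenvalue_root_char_poly[OF dmat_carrier] by blast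
      then have "poly (char_poly H) (ds ! j) = 0" using char_poly_similar[OF sim] by simp
      then show ?thesis using eigenvalue_root_char_poly[OF H] by blast
    qed
    let ?S' = "?S - {l}"
    have finS': "finite ?S'" using finS by simp
    have cS': "card ?S' = k - 1" using card l finS by (simp add: card_Diff_singleton)
    obtain g where g: "bij_betw g {1..k-1} ?S'"
      using ex_bij_betw_nat_finite_1[OF finS'] cS' by metis
    define \<mu> where "\<mu> = (\<lambda>i. if i = k then l else g i)"
    have gS: "g i \<in> ?S'" if "i \<in> {1..k-1}" for i using g that unfolding bij_betw_def by auto
    have inj: "inj_on \<mu> {1..k}"
    proof (rule inj_onI)
      fix i j assume i: "i \<in> {1..k}" and j: "j \<in> {1..k}" and eq: "\<mu> i = \<mu> j"
      show "i = j"
      proof (cases "i = k"; cases "j = k")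
        assume "i \<noteq> k" "j \<noteq> k"
        then have "i \<in> {1..k-1}" "j \<in> {1..k-1}" using i j by auto
        moreover have "g i = g j" using eq \<open>i \<noteq> k\<close> \<open>j \<noteq> k\<close> unfolding \<mu>_def by simp
        ultimately show ?thesis using g unfolding bij_betw_def inj_on_def by blast
      next
        assume "i = k" "j \<noteq> k"
        then have "j \<in> {1..k-1}" using j by auto
        then have "g j \<noteq> l" using gS by blast
        then show ?thesis using eq \<open>i = k\<close> \<open>j \<noteq> k\<close> unfolding \<mu>_def by simp
      next
        assume "i \<noteq> k" "j = k"
        then have "i \<in> {1..k-1}" using i by auto
        then have "g i \<noteq> l" using gS by blast
        then show ?thesis using eq \<open>i \<noteq> k\<close> \<open>j = k\<close> unfolding \<mu>_def by simp
      qed simp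
    qed
    have sing: "\<forall>i \<in> {1..k-1}. \<not> invertible_mat (H - \<mu> i \<cdot>\<^sub>m 1\<^sub>m n)"
    proof
      fix i assume i: "i \<in> {1..k-1}"
      then have "\<mu> i = g i" unfolding \<mu>_def using k by auto
      moreover have "eigenvalue H (g i)" using gS[OF i] by simp
      ultimately obtain v where v: "v \<in> carrier_vec n" "v \<noteq> 0\<^sub>v n" "H *\<^sub>v v = \<mu> i \<cdot>\<^sub>v v"
        using H unfolding eigenvalue_def eigenvector_def by auto
      show "\<not> invertible_mat (H - \<mu> i \<cdot>\<^sub>m 1\<^sub>m n)" by (rule eigenvector_imp_not_invertible[OF H v])
    qed
    have van: "\<forall>j<n. j \<noteq> j0 \<longrightarrow> (\<Prod>i=1..k-1. ds ! j - \<mu> i) = 0"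
    proof (intro allI impI)
      fix j assume j: "j < n" "j \<noteq> j0"
      have "ds ! j \<in> ?S'" using dsev[OF j(1)] uniq j by auto
      moreover have "g ` {1..k-1} = ?S'" using g unfolding bij_betw_def by blast
      ultimately obtain i where i: "i \<in> {1..k-1}" "g i = ds ! j"
        by (metis (no_types, lifting) imageE)
      have "\<mu> i = ds ! j" using i k unfolding \<mu>_def by auto
      then show "(\<Prod>i=1..k-1. ds ! j - \<mu> i) = 0" using i(1)
        by (subst prod_zero_iff) (auto intro!: bexI[of _ i])
    qed
    from forward_core[OF H sym PP RR PR RP HD refl j0 uniq van]
    obtain \<alpha> where a: "\<alpha> \<in> carrier_vec n" "\<alpha> \<noteq> 0\<^sub>v n"
      and prod: "mat_prod_upto n (\<lambda>i. H - \<mu> i \<cdot>\<^sub>m 1\<^sub>m n) (k-1) = ((\<Prod>i=1..k-1. l - \<mu> i) / (\<alpha> \<bullet> \<alpha>)) \<cdot>\<^sub>m outer_self \<alpha>"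
      and eig: "H *\<^sub>v \<alpha> = l \<cdot>\<^sub>v \<alpha>" by blast
    have muk: "\<mu> k = l" unfolding \<mu>_def by simp
    have "P \<mu>" unfolding P_def using inj sing a prod eig muk by auto
    then show ?thesis by blast
  qed
  have dir2: "card {x. eigenvalue H x} = k" if "P \<mu>" for \<mu>
  proof -
    have "inj_on \<mu> {1..k}" using that unfolding P_def by blast
    then have "card (\<mu> ` {1..k}) = k" by (simp add: card_image)
    then show ?thesis using part2 that by simp
  qed
  show ?thesis using part2 dir1 dir2 by blast
qed

end
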